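(* Let $\mu$ be a Borel probability measure on the metric space $(X,d)$ and $k\geq2$ an integer. Then \[(k-1)\underline{D}_k(\mu)=\liminf_{r\to0}\frac{\log\int_{X^k}\prod_{j=1}^{k-1}\prod_{l=j+1}^k\mathbbm{1}_{B(x_j,r)}(x_l)\,d\mu^k(x_1,\dots,x_k)}{\log r}\] and \[(k-1)\overline{D}_k(\mu)=\limsup_{r\to0}\frac{\log\int_{X^k}\prod_{j=1}^{k-1}\prod_{l=j+1}^k\mathbbm{1}_{B(x_j,r)}(x_l)\,d\mu^k(x_1,\dots,x_k)}{\log r}.\]
   Context: $(X,d)$ is a finite dimensional metric space (standing assumption of the paper); $B(x,r)$ is the open ball, $\mu^k$ the product measure. $\underline{D}_k(\mu)=\liminf_{r\to0}\frac{\log\int_X\mu(B(x,r))^{k-1}d\mu(x)}{(k-1)\log r}$ and $\overline{D}_k(\mu)$ is the same with $\limsup$. *)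

theory Defs
  imports "HOL-Probability.Probability"
begin

text \<open>Finite dimensional metric space: finite Assouad dimension, equivalently
  the doubling property (every ball of radius 2r is covered by at most N balls of radius r).\<close>
definition doubling_metric :: "'a::metric_space itself \<Rightarrow> bool" where
  "doubling_metric _ \<longleftrightarrow> (\<exists>N::nat. \<forall>(x::'a) r. r > 0 \<longrightarrow>
     (\<exists>C. finite C \<and> card C \<le> N \<and> ball x (2 * r) \<subseteq> (\<Union>c\<in>C. ball c r)))"

definition corr_integral :: "'a::metric_space measure \<Rightarrow> nat \<Rightarrow> real \<Rightarrow> real" where
  "corr_integral M k r = (\<integral>x. (measure M (ball x r)) ^ (k - 1) \<partial>M)"

definition lower_Dk :: "'a::metric_space measure \<Rightarrow> nat \<Rightarrow> ereal" where
  "lower_Dk M k = Liminf (at_right 0)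
     (\<lambda>r. ereal (ln (corr_integral M k r) / ((real k - 1) * ln r)))"

definition upper_Dk :: "'a::metric_space measure \<Rightarrow> nat \<Rightarrow> ereal" where
  "upper_Dk M k = Limsup (at_right 0)
     (\<lambda>r. ereal (ln (corr_integral M k r) / ((real k - 1) * ln r)))"

definition pair_corr_integral :: "'a::metric_space measure \<Rightarrow> nat \<Rightarrow> real \<Rightarrow> real" where
  "pair_corr_integral M k r =
     (\<integral>x. (\<Prod>j<k. \<Prod>l\<in>{j<..<k}. indicator (ball (x j) r) (x l)) \<partial>(PiM {..<k} (\<lambda>_. M)))"

end

theory Submission
  imports Defs
begin

lemma doubling_cover:
  assumes dbl: "doubling_metric TYPE('a::metric_space)" and r: "r > 0"
  shows "\<exists>C. finite C \<and> ball (x::'a) (2^m * r) \<subseteq> (\<Union>c\<in>C. ball c r)"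
  using r
proof (induction m arbitrary: x r)
  case 0
  then show ?case by (intro exI[of _ "{x}"]) auto
next
  case (Suc m)
  from Suc.IH[of "2*r" x] Suc.prems obtain C where C: "finite C" "ball x (2^m * (2*r)) \<subseteq> (\<Union>c\<in>C. ball c (2*r))"
    by auto
  from dbl Suc.prems have "\<forall>c::'a. \<exists>E. finite E \<and> ball c (2*r) \<subseteq> (\<Union>d\<in>E. ball d r)"
    unfolding doubling_metric_def by blast
  from choice[OF this] obtain E :: "'a \<Rightarrow> 'a set" where E: "\<And>c. finite (E c) \<and> ball c (2*r) \<subseteq> (\<Union>d\<in>E c. ball d r)"
    by blast
  have eq: "2^Suc m * r = 2^m * (2*r)" by simp
  have "ball x (2^Suc m * r) = ball x (2^m * (2*r))" by (simp only: eq)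
  also have "\<dots> \<subseteq> (\<Union>c\<in>C. ball c (2*r))" by fact
  also have "\<dots> \<subseteq> (\<Union>d\<in>(\<Union>c\<in>C. E c). ball d r)"
  proof (rule subsetI)
    fix y assume "y \<in> (\<Union>c\<in>C. ball c (2*r))"
    then obtain c where c: "c \<in> C" "y \<in> ball c (2*r)" by blast
    then have "y \<in> (\<Union>d\<in>E c. ball d r)" using E[of c] by blast
    then obtain d where "d \<in> E c" "y \<in> ball d r" by blast
    then show "y \<in> (\<Union>d\<in>(\<Union>c\<in>C. E c). ball d r)" using c(1) by blast
  qed
  finally have "ball x (2^Suc m * r) \<subseteq> (\<Union>d\<in>(\<Union>c\<in>C. E c). ball d r)" .
  moreover have "finite (\<Union>c\<in>C. E c)" using C(1) E by blast
  ultimately show ?case by blast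
qed

lemma doubling_separable:
  assumes dbl: "doubling_metric TYPE('a::metric_space)"
  shows "\<exists>D::'a set. countable D \<and> (\<forall>x e. e > 0 \<longrightarrow> (\<exists>c\<in>D. dist x c < e))"
proof -
  define x0 :: 'a where "x0 = undefined"
  define C where "C = (\<lambda>(n::nat) (m::nat). SOME C. finite C \<and> ball x0 (2^n * (1/2)^m) \<subseteq> (\<Union>c\<in>C. ball c ((1/2)^m)))"
  have C: "finite (C n m) \<and> ball x0 (2^n * (1/2)^m) \<subseteq> (\<Union>c\<in>C n m. ball c ((1/2)^m))" for n m
    unfolding C_def by (rule someI_ex, rule doubling_cover[OF dbl]) simp
  have cnt: "countable (\<Union>n. \<Union>m. C n m)"
  proof -
    have "countable (C n m)" for n m using C countable_finite by blast
    then show ?thesis by auto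
  qed
  moreover have "\<exists>c\<in>(\<Union>n. \<Union>m. C n m). dist x c < e" if "e > 0" for x e
  proof -
    obtain m where m: "(1/2::real)^m < e" using real_arch_pow_inv[of e "1/2"] \<open>e>0\<close> by auto
    obtain n where n: "dist x0 x * 2^m < 2^n" using real_arch_pow[of 2 "dist x0 x * 2^m"] by auto
    have "dist x0 x < 2^n * (1/2)^m" using n by (simp add: field_simps)
    then have "x \<in> ball x0 (2^n * (1/2)^m)" by simp
    then have "x \<in> (\<Union>c\<in>C n m. ball c ((1/2)^m))" using C[of n m] by blast
    then obtain c where "c \<in> C n m" "dist c x < (1/2)^m" by auto
    then show ?thesis using m by (intro bexI[of _ c]) (auto simp: dist_commute)
  qed
  ultimately show ?thesis by blast
qed

lemma meas_dist_lt:
  fixes f g :: "'b \<Rightarrow> 'a::metric_space" and D :: "'a set"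
  assumes D: "countable D" "\<forall>x e. e > 0 \<longrightarrow> (\<exists>c\<in>D. dist x c < e)"
    and sM: "sets M = sets borel" and f: "f \<in> measurable N M" and g: "g \<in> measurable N M"
  shows "{w \<in> space N. dist (f w) (g w) < r} \<in> sets N"
proof -
  have eq: "{w \<in> space N. dist (f w) (g w) < r} =
     (\<Union>c\<in>D. \<Union>q\<in>\<rat>. (f -` ball c q \<inter> space N) \<inter> (g -` ball c (r - q) \<inter> space N))"
  proof (intro equalityI subsetI)
    fix w assume w: "w \<in> {w \<in> space N. dist (f w) (g w) < r}"
    define \<eta> where "\<eta> = r - dist (f w) (g w)"
    have "\<eta> > 0" using w by (simp add: \<eta>_def)
    then obtain c where c: "c \<in> D" "dist (f w) c < \<eta>/3" using D(2) by (meson zero_less_divide_iff zero_less_numeral)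
    obtain q where q: "q \<in> \<rat>" "dist (f w) c < q" "q < \<eta>/3" using Rats_dense_in_real c(2) by blast
    have "dist (g w) c \<le> dist (f w) (g w) + dist (f w) c" using dist_triangle3[of "g w" c "f w"] by (simp add: dist_commute)
    moreover have "3 * q < r - dist (f w) (g w)" using q(3) unfolding \<eta>_def by simp
    ultimately have "dist (g w) c < r - q" using q(2) \<open>\<eta>>0\<close> unfolding \<eta>_def by linarith
    then show "w \<in> (\<Union>c\<in>D. \<Union>q\<in>\<rat>. (f -` ball c q \<inter> space N) \<inter> (g -` ball c (r - q) \<inter> space N))"
    proof -
      have "w \<in> (f -` ball c q \<inter> space N) \<inter> (g -` ball c (r - q) \<inter> space N)"
        using w q \<open>dist (g w) c < r - q\<close> by (simp add: dist_commute)
      then show ?thesis using c(1) q(1) by blast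
    qed
  next
    fix w assume "w \<in> (\<Union>c\<in>D. \<Union>q\<in>\<rat>. (f -` ball c q \<inter> space N) \<inter> (g -` ball c (r - q) \<inter> space N))"
    then obtain c q where "w \<in> space N" "dist c (f w) < q" "dist c (g w) < r - q" by auto
    moreover have "dist (f w) (g w) \<le> dist c (f w) + dist c (g w)" by (rule dist_triangle3)
    ultimately show "w \<in> {w \<in> space N. dist (f w) (g w) < r}" by auto
  qed
  have bs: "ball c s \<in> sets M" for c s using sM by simp
  show ?thesis unfolding eq
    by (intro sets.countable_UN'' D(1) countable_rat sets.Int measurable_sets[OF f bs] measurable_sets[OF g bs])
qed


lemma prod_01:
  assumes "finite A"
  shows "(\<Prod>j\<in>A. (if B j then 1 else 0 :: 'b::comm_semiring_1)) = (if \<forall>j\<in>A. B j then 1 else 0)"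
  using assms by (induction A rule: finite_induct) auto

lemma prod_ind01:
  assumes "finite A"
  shows "(\<Prod>j\<in>A. (indicator (S j) (x j) :: 'b::comm_semiring_1)) = (if \<forall>j\<in>A. x j \<in> S j then 1 else 0)"
  using assms by (induction A rule: finite_induct) (auto simp: indicator_def)

lemma key_measure:
  fixes M :: "'a::metric_space measure" and k :: nat
  assumes dbl: "doubling_metric TYPE('a)"
    and pM: "prob_space M" and sM: "sets M = sets borel"
    and k: "k \<ge> 2"
  shows "0 \<le> pair_corr_integral M k r \<and> pair_corr_integral M k r \<le> corr_integral M k r \<and>
         corr_integral M k (r/2) \<le> pair_corr_integral M k r \<and> corr_integral M k r \<le> 1 \<and>
         (r \<le> s \<longrightarrow> corr_integral M k r \<le> corr_integral M k s) \<and> 0 \<le> corr_integral M k r"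
proof -
  obtain D :: "'a set" where D: "countable D" "\<forall>x e. e > 0 \<longrightarrow> (\<exists>c\<in>D. dist x c < e)"
    using doubling_separable[OF dbl] by blast
  have spM: "space M = UNIV" using sets_eq_imp_space_eq[OF sM] by simp
  interpret P: product_sigma_finite "\<lambda>_::nat. M"
    unfolding product_sigma_finite_def using prob_space_imp_sigma_finite[OF pM] by simp
  interpret sM': sigma_finite_measure M using prob_space_imp_sigma_finite[OF pM] .
  define Pi where "Pi = PiM {..<k} (\<lambda>_. M)"
  interpret PP: prob_space Pi unfolding Pi_def by (rule prob_space_PiM) (use pM in auto)
  have meas_ind: "(\<lambda>z. indicator (ball (z j) t) (z l) :: real) \<in> borel_measurable (PiM J (\<lambda>_. M))"
    if "j \<in> J" "l \<in> J" for J :: "nat set" and j l t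
  proof -
    have "{z \<in> space (PiM J (\<lambda>_. M)). dist (z j) (z l) < t} \<in> sets (PiM J (\<lambda>_. M))"
      by (rule meas_dist_lt[OF D sM measurable_component_singleton[OF that(1)] measurable_component_singleton[OF that(2)]])
    then have "(\<lambda>z. if dist (z j) (z l) < t then 1 else 0 :: real) \<in> borel_measurable (PiM J (\<lambda>_. M))"
      by (intro measurable_If) auto
    moreover have "indicator (ball (z j) t) (z l) = (if dist (z j) (z l) < t then 1 else 0 :: real)" for z :: "nat \<Rightarrow> 'a"
      by (simp add: indicator_def)
    ultimately show ?thesis using measurable_cong[of "PiM J (\<lambda>_. M)" "\<lambda>z. indicator (ball (z j) t) (z l) :: real" "\<lambda>z. if dist (z j) (z l) < t then 1 else 0" borel]
      by simp
  qed
  define I where "I = {0::nat<..<k}"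
  have I: "finite I" "0 \<notin> I" "{..<k} = insert 0 I" "card I = k - 1"
    using k unfolding I_def by auto
  define Q where "Q = (\<lambda>t (z::nat \<Rightarrow> 'a). \<Prod>l\<in>I. indicator (ball (z 0) t) (z l) :: real)"
  define PP where "PP = (\<lambda>t (z::nat \<Rightarrow> 'a). \<Prod>j<k. \<Prod>l\<in>{j<..<k}. indicator (ball (z j) t) (z l) :: real)"
  have Qv: "Q t z = (if \<forall>l\<in>I. dist (z 0) (z l) < t then 1 else 0)" for t z
    unfolding Q_def by (subst prod_ind01[OF I(1)]) simp
  have PPv: "PP t z = (if \<forall>j<k. \<forall>l\<in>{j<..<k}. dist (z j) (z l) < t then 1 else 0)" for t z
    unfolding PP_def by (simp add: prod_ind01 prod_01)
  have Qm: "Q t \<in> borel_measurable Pi" for t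
    unfolding Q_def Pi_def using I by (intro borel_measurable_prod meas_ind) auto
  have PPm: "PP t \<in> borel_measurable Pi" for t
    unfolding PP_def Pi_def by (intro borel_measurable_prod meas_ind) auto
  have Qi: "integrable Pi (Q t)" for t
    by (rule PP.integrable_const_bound[of _ 1]) (auto simp: Qv Qm)
  have PPi: "integrable Pi (PP t)" for t
    by (rule PP.integrable_const_bound[of _ 1]) (auto simp: PPv PPm)
  have pair_eq: "pair_corr_integral M k t = integral\<^sup>L Pi (PP t)" for t
    unfolding pair_corr_integral_def PP_def Pi_def ..
  have corr_eq: "corr_integral M k t = integral\<^sup>L Pi (Q t)" for t
  proof -
    have Sset: "{w \<in> space (M \<Otimes>\<^sub>M M). dist (fst w) (snd w) < t} \<in> sets (M \<Otimes>\<^sub>M M)"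
      by (rule meas_dist_lt[OF D sM measurable_fst measurable_snd])
    have pre: "Pair y -` {w \<in> space (M \<Otimes>\<^sub>M M). dist (fst w) (snd w) < t} = ball y t" for y
      by (auto simp: space_pair_measure spM)
    have emb: "(\<lambda>y. emeasure M (ball y t)) \<in> borel_measurable M"
      using sigma_finite_measure.measurable_emeasure_Pair[OF prob_space_imp_sigma_finite[OF pM] Sset] unfolding pre .
    have "(\<lambda>y. enn2real (emeasure M (ball y t))) \<in> borel_measurable M"
      using emb by (rule borel_measurable_enn2real)
    then have mb: "(\<lambda>y. measure M (ball y t) ^ (k-1)) \<in> borel_measurable M"
      unfolding measure_def by (rule borel_measurable_power)
    have c1: "corr_integral M k t = enn2real (\<integral>\<^sup>+y. ennreal (measure M (ball y t) ^ (k-1)) \<partial>M)"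
      unfolding corr_integral_def by (rule integral_eq_nn_integral[OF mb]) auto
    have c2: "integral\<^sup>L Pi (Q t) = enn2real (\<integral>\<^sup>+z. ennreal (Q t z) \<partial>Pi)"
      by (rule integral_eq_nn_integral[OF Qm]) (auto simp: Qv)
    have Qm'[measurable]: "Q t \<in> borel_measurable (PiM (insert 0 I) (\<lambda>_. M))"
      using Qm unfolding Pi_def I(3) .
    have bsets[measurable]: "ball y t \<in> sets M" for y using sM by simp
    have "(\<integral>\<^sup>+z. ennreal (Q t z) \<partial>Pi) =
        (\<integral>\<^sup>+y. (\<integral>\<^sup>+x. ennreal (Q t (x(0:=y))) \<partial>PiM I (\<lambda>_. M)) \<partial>M)"
      unfolding Pi_def I(3) by (rule P.product_nn_integral_insert_rev[OF I(1) I(2)]) measurable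
    also have "\<dots> = (\<integral>\<^sup>+y. ennreal (measure M (ball y t) ^ (k-1)) \<partial>M)"
    proof (rule nn_integral_cong)
      fix y
      have "(\<integral>\<^sup>+x. ennreal (Q t (x(0:=y))) \<partial>PiM I (\<lambda>_. M)) =
            (\<integral>\<^sup>+x. (\<Prod>l\<in>I. indicator (ball y t) (x l)) \<partial>PiM I (\<lambda>_. M))"
      proof (rule nn_integral_cong)
        fix x :: "nat \<Rightarrow> 'a"
        have "(\<forall>l\<in>I. dist ((x(0:=y)) 0) ((x(0:=y)) l) < t) \<longleftrightarrow> (\<forall>l\<in>I. x l \<in> ball y t)"
          using I(2) by (metis fun_upd_other fun_upd_same mem_ball)
        then show "ennreal (Q t (x(0:=y))) = (\<Prod>l\<in>I. indicator (ball y t) (x l))"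
          by (simp add: Qv prod_ind01[OF I(1)])
      qed
      also have "\<dots> = (\<Prod>l\<in>I. \<integral>\<^sup>+w. indicator (ball y t) w \<partial>M)"
        by (rule P.product_nn_integral_prod[OF I(1)]) measurable
      also have "\<dots> = emeasure M (ball y t) ^ (k-1)"
        using I(4) by (simp add: bsets)
      also have "\<dots> = ennreal (measure M (ball y t) ^ (k-1))"
        using finite_measure.emeasure_eq_measure[OF conjunct1[OF pM[unfolded prob_space_def]]] by (simp add: ennreal_power)
      finally show "(\<integral>\<^sup>+x. ennreal (Q t (x(0:=y))) \<partial>PiM I (\<lambda>_. M)) = ennreal (measure M (ball y t) ^ (k-1))" .
    qed
    finally show ?thesis using c1 c2 by simp
  qed
  have ineq1: "PP t z \<le> Q t z" for t z
    using k by (auto simp: PPv Qv I_def)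
  have ineq2: "Q (t/2) z \<le> PP t z" for t z
  proof (cases "\<forall>l\<in>I. dist (z 0) (z l) < t/2")
    case True
    have "dist (z j) (z l) < t" if "j < k" "l \<in> {j<..<k}" for j l
    proof (cases "j = 0")
      case True
      have "l \<in> I" using that True unfolding I_def by auto
      then have "dist (z 0) (z l) < t/2" using \<open>\<forall>l\<in>I. dist (z 0) (z l) < t/2\<close> by blast
      moreover have "0 \<le> dist (z 0) (z l)" by simp
      ultimately have "dist (z 0) (z l) < t" by linarith
      then show ?thesis using True by simp
    next
      case False
      then have "dist (z 0) (z j) < t/2" "dist (z 0) (z l) < t/2"
        using True that unfolding I_def by auto
      moreover have "dist (z j) (z l) \<le> dist (z 0) (z j) + dist (z 0) (z l)" by (rule dist_triangle3)
      ultimately show ?thesis by linarith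
    qed
    then show ?thesis by (simp add: PPv Qv)
  next
    case False
    then have "Q (t/2) z = 0" unfolding Qv by (rule if_not_P)
    moreover have "0 \<le> PP t z" by (simp add: PPv)
    ultimately show ?thesis by simp
  qed
  have mono: "Q t z \<le> Q s z" if "t \<le> s" for t z
    using that by (auto simp: Qv)
  have Q1: "integral\<^sup>L Pi (Q t) \<le> 1" for t
  proof -
    have "integral\<^sup>L Pi (Q t) \<le> integral\<^sup>L Pi (\<lambda>_. 1::real)"
      by (rule integral_mono) (auto simp: Qi Qv)
    then show ?thesis by (simp add: PP.prob_space)
  qed
  have a1: "integral\<^sup>L Pi (PP r) \<le> integral\<^sup>L Pi (Q r)"
    by (rule integral_mono[OF PPi Qi]) (rule ineq1)
  have a2: "integral\<^sup>L Pi (Q (r/2)) \<le> integral\<^sup>L Pi (PP r)"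
    by (rule integral_mono[OF Qi PPi]) (rule ineq2)
  have a3: "integral\<^sup>L Pi (Q r) \<le> integral\<^sup>L Pi (Q s)" if "r \<le> s"
    by (rule integral_mono[OF Qi Qi]) (rule mono[OF that])
  have a4: "0 \<le> integral\<^sup>L Pi (PP r)" by (rule Bochner_Integration.integral_nonneg) (simp add: PPv)
  have a5: "0 \<le> integral\<^sup>L Pi (Q r)" by (rule Bochner_Integration.integral_nonneg) (simp add: Qv)
  show ?thesis unfolding pair_eq corr_eq using a1 a2 a3 a4 a5 Q1[of r] by blast
qed


lemma eps_ereal:
  fixes x L :: ereal
  assumes L: "L \<ge> 0" and h: "\<And>\<epsilon>. \<epsilon> > 0 \<Longrightarrow> x \<le> ereal (1+\<epsilon>) * L"
  shows "x \<le> L"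
proof (cases L)
  case (real l)
  show ?thesis
  proof (rule ereal_le_epsilon2)
    fix e :: real assume e: "e > 0"
    have l: "l \<ge> 0" using L real by simp
    define \<epsilon> where "\<epsilon> = e / (l + 1)"
    have "\<epsilon> > 0" using e l by (simp add: \<epsilon>_def)
    have "\<epsilon> * l \<le> e"
    proof -
      have "\<epsilon> * l = e * (l / (l+1))" by (simp add: \<epsilon>_def)
      also have "\<dots> \<le> e * 1" using e l by (intro mult_left_mono) auto
      finally show ?thesis by simp
    qed
    then have "(1+\<epsilon>) * l \<le> l + e" by (simp add: algebra_simps)
    then have "ereal (1+\<epsilon>) * L \<le> L + ereal e" using real by simp
    then show "x \<le> L + ereal e" using h[OF \<open>\<epsilon>>0\<close>] by (rule order_trans[rotated])
  qed
next
  case PInf then show ?thesis by simp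
next
  case MInf then show ?thesis using L by simp
qed

lemma sandwich:
  fixes a b :: "real \<Rightarrow> real"
  assumes lo: "eventually (\<lambda>r. a r \<le> b r) (at_right 0)"
    and hi: "\<And>\<epsilon>. \<epsilon> > 0 \<Longrightarrow> eventually (\<lambda>r. b r \<le> (1+\<epsilon>) * a (r/2)) (at_right 0)"
    and nn: "eventually (\<lambda>r. 0 \<le> a r) (at_right 0)"
  shows "Liminf (at_right 0) (\<lambda>r. ereal (b r)) = Liminf (at_right 0) (\<lambda>r. ereal (a r)) \<and>
         Limsup (at_right 0) (\<lambda>r. ereal (b r)) = Limsup (at_right 0) (\<lambda>r. ereal (a r))"
proof -
  let ?F = "at_right (0::real)"
  have Fnb: "?F \<noteq> bot" by simp
  have fm: "filtermap ((*) (1/2)) ?F = ?F"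
    by (subst filtermap_times_pos_at_right) auto
  have inj: "inj ((*) (1/2::real))" by (auto intro: injI)
  have half1: "Liminf ?F (\<lambda>r. ereal (a (r/2))) = Liminf ?F (\<lambda>r. ereal (a r))"
    using Liminf_filtermap_eq[OF inj, of ?F "\<lambda>r. ereal (a r)"] unfolding fm by simp
  have half2: "Limsup ?F (\<lambda>r. ereal (a (r/2))) = Limsup ?F (\<lambda>r. ereal (a r))"
    using Limsup_filtermap_eq[OF inj, of ?F "\<lambda>r. ereal (a r)"] unfolding fm by simp
  have L0: "0 \<le> Liminf ?F (\<lambda>r. ereal (a r))"
    by (rule Liminf_bounded) (use nn in \<open>auto elim: eventually_mono\<close>)
  have U0: "0 \<le> Limsup ?F (\<lambda>r. ereal (a r))"
    using L0 Liminf_le_Limsup[of ?F] by (metis order_trans trivial_limit_at_right_real)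
  have i1: "Liminf ?F (\<lambda>r. ereal (a r)) \<le> Liminf ?F (\<lambda>r. ereal (b r))"
    by (rule Liminf_mono) (use lo in \<open>auto elim: eventually_mono\<close>)
  have s1: "Limsup ?F (\<lambda>r. ereal (a r)) \<le> Limsup ?F (\<lambda>r. ereal (b r))"
    by (rule Limsup_mono) (use lo in \<open>auto elim: eventually_mono\<close>)
  have i2: "Liminf ?F (\<lambda>r. ereal (b r)) \<le> Liminf ?F (\<lambda>r. ereal (a r))"
  proof (rule eps_ereal[OF L0])
    fix \<epsilon> :: real assume e: "\<epsilon> > 0"
    have "Liminf ?F (\<lambda>r. ereal (b r)) \<le> Liminf ?F (\<lambda>r. ereal (1+\<epsilon>) * ereal (a (r/2)))"
      by (rule Liminf_mono) (use hi[OF e] in \<open>auto elim: eventually_mono\<close>)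
    also have "\<dots> = ereal (1+\<epsilon>) * Liminf ?F (\<lambda>r. ereal (a (r/2)))"
      by (rule Liminf_ereal_mult_left) (use e in auto)
    finally show "Liminf ?F (\<lambda>r. ereal (b r)) \<le> ereal (1+\<epsilon>) * Liminf ?F (\<lambda>r. ereal (a r))"
      unfolding half1 .
  qed
  have s2: "Limsup ?F (\<lambda>r. ereal (b r)) \<le> Limsup ?F (\<lambda>r. ereal (a r))"
  proof (rule eps_ereal[OF U0])
    fix \<epsilon> :: real assume e: "\<epsilon> > 0"
    have "Limsup ?F (\<lambda>r. ereal (b r)) \<le> Limsup ?F (\<lambda>r. ereal (1+\<epsilon>) * ereal (a (r/2)))"
      by (rule Limsup_mono) (use hi[OF e] in \<open>auto elim: eventually_mono\<close>)
    also have "\<dots> = ereal (1+\<epsilon>) * Limsup ?F (\<lambda>r. ereal (a (r/2)))"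
      by (rule Limsup_ereal_mult_left) (use e in auto)
    finally show "Limsup ?F (\<lambda>r. ereal (b r)) \<le> ereal (1+\<epsilon>) * Limsup ?F (\<lambda>r. ereal (a r))"
      unfolding half2 .
  qed
  show ?thesis using i1 i2 s1 s2 by auto
qed

lemma log_ratio_bound:
  fixes \<epsilon> :: real
  assumes e: "\<epsilon> > 0"
  shows "eventually (\<lambda>r. 0 < r \<and> r < 1 \<and> ln (r/2) / ln r \<le> 1 + \<epsilon>) (at_right 0)"
proof -
  define b where "b = min 1 (exp (- ln 2 / \<epsilon>))"
  have b: "b > 0" by (simp add: b_def)
  have "0 < r \<and> r < 1 \<and> ln (r/2) / ln r \<le> 1 + \<epsilon>" if r: "0 < r" "r < b" for r
  proof -
    have r1: "r < 1" using r by (simp add: b_def)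
    have lr: "ln r < 0" using r r1 by simp
    have "ln r < ln (exp (- ln 2 / \<epsilon>))"
      using r by (subst ln_less_cancel_iff) (auto simp: b_def)
    then have "ln r < - ln 2 / \<epsilon>" by simp
    then have "\<epsilon> * ln r < - ln 2" using e by (simp add: field_simps)
    then have "(1+\<epsilon>) * ln r \<le> ln r - ln 2" by (simp add: algebra_simps)
    moreover have "ln (r/2) = ln r - ln 2" using r by (simp add: ln_div)
    ultimately have "ln (r/2) / ln r \<le> 1 + \<epsilon>" using lr by (simp add: divide_le_eq)
    then show ?thesis using r r1 by simp
  qed
  then show ?thesis unfolding eventually_at_right_field using b by blast
qed


theorem mainTheorem10:
  fixes M :: "'a::metric_space measure" and k :: nat
  assumes "doubling_metric TYPE('a)"
    and "prob_space M" and "sets M = sets borel"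
    and "k \<ge> 2"
  shows "ereal (real k - 1) * lower_Dk M k =
           Liminf (at_right 0) (\<lambda>r. ereal (ln (pair_corr_integral M k r) / ln r)) \<and>
         ereal (real k - 1) * upper_Dk M k =
           Limsup (at_right 0) (\<lambda>r. ereal (ln (pair_corr_integral M k r) / ln r))"
proof -
  let ?F = "at_right (0::real)"
  define c where "c = corr_integral M k"
  define p where "p = pair_corr_integral M k"
  define a where "a = (\<lambda>r. ln (c r) / ln r)"
  define b where "b = (\<lambda>r. ln (p r) / ln r)"
  have K: "0 \<le> p r \<and> p r \<le> c r \<and> c (r/2) \<le> p r \<and> c r \<le> 1 \<and>
         (r \<le> s \<longrightarrow> c r \<le> c s) \<and> 0 \<le> c r" for r s
    unfolding c_def p_def by (rule key_measure[OF assms])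
  have k1: "real k - 1 > 0" using assms(4) by simp
  have low: "ereal (real k - 1) * lower_Dk M k = Liminf ?F (\<lambda>r. ereal (a r))"
  proof -
    have "lower_Dk M k = Liminf ?F (\<lambda>r. ereal (1 / (real k - 1)) * ereal (a r))"
      unfolding lower_Dk_def a_def c_def by (simp add: field_simps)
    also have "\<dots> = ereal (1 / (real k - 1)) * Liminf ?F (\<lambda>r. ereal (a r))"
      by (rule Liminf_ereal_mult_left) (use k1 in auto)
    finally have eq: "lower_Dk M k = ereal (1 / (real k - 1)) * Liminf ?F (\<lambda>r. ereal (a r))" .
    have "ereal (real k - 1) * lower_Dk M k =
        ereal (real k - 1) * (ereal (1 / (real k - 1)) * Liminf ?F (\<lambda>r. ereal (a r)))"
      by (simp only: eq)
    also have "\<dots> = (ereal (real k - 1) * ereal (1 / (real k - 1))) * Liminf ?F (\<lambda>r. ereal (a r))"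
      by (rule mult.assoc[symmetric])
    also have "ereal (real k - 1) * ereal (1 / (real k - 1)) = 1" using k1 by simp
    finally show ?thesis by simp
  qed
  have up: "ereal (real k - 1) * upper_Dk M k = Limsup ?F (\<lambda>r. ereal (a r))"
  proof -
    have "upper_Dk M k = Limsup ?F (\<lambda>r. ereal (1 / (real k - 1)) * ereal (a r))"
      unfolding upper_Dk_def a_def c_def by (simp add: field_simps)
    also have "\<dots> = ereal (1 / (real k - 1)) * Limsup ?F (\<lambda>r. ereal (a r))"
      by (rule Limsup_ereal_mult_left) (use k1 in auto)
    finally have eq: "upper_Dk M k = ereal (1 / (real k - 1)) * Limsup ?F (\<lambda>r. ereal (a r))" .
    have "ereal (real k - 1) * upper_Dk M k =
        ereal (real k - 1) * (ereal (1 / (real k - 1)) * Limsup ?F (\<lambda>r. ereal (a r)))"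
      by (simp only: eq)
    also have "\<dots> = (ereal (real k - 1) * ereal (1 / (real k - 1))) * Limsup ?F (\<lambda>r. ereal (a r))"
      by (rule mult.assoc[symmetric])
    also have "ereal (real k - 1) * ereal (1 / (real k - 1)) = 1" using k1 by simp
    finally show ?thesis by simp
  qed
  have main: "Liminf ?F (\<lambda>r. ereal (b r)) = Liminf ?F (\<lambda>r. ereal (a r)) \<and>
              Limsup ?F (\<lambda>r. ereal (b r)) = Limsup ?F (\<lambda>r. ereal (a r))"
  proof (cases "\<exists>r0>0. c r0 \<le> 0")
    case True
    then obtain r0 where r0: "r0 > 0" "c r0 \<le> 0" by blast
    have "a r = b r" if "0 < r" "r < r0" for r
    proof -
      have "c r = 0" using K[of r r0] r0 that by auto
      moreover have "p r = 0" using K[of r r0] \<open>c r = 0\<close> by auto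
      ultimately show ?thesis by (simp add: a_def b_def)
    qed
    then have ev: "eventually (\<lambda>r. ereal (b r) = ereal (a r)) ?F"
      unfolding eventually_at_right_field using r0 by (metis)
    show ?thesis using Liminf_eq[OF ev] Limsup_eq[OF ev] by simp
  next
    case False
    then have cpos: "c r > 0" if "r > 0" for r using that by force
    have ev01: "eventually (\<lambda>r. 0 < r \<and> r < 1) ?F"
      unfolding eventually_at_right_field by (intro exI[of _ 1]) auto
    have apos: "0 \<le> a r" if "0 < r" "r < 1" for r
      unfolding a_def using K[of r r] cpos[of r] that by (intro divide_nonpos_neg) auto
    show ?thesis
    proof (rule sandwich)
      show "eventually (\<lambda>r. a r \<le> b r) ?F"
      proof (rule eventually_mono[OF ev01])
        fix r :: real assume r: "0 < r \<and> r < 1"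
        have "c (r/2) > 0" using cpos r by simp
        then have "p r > 0" using K[of r r] by linarith
        then have "ln (p r) \<le> ln (c r)" using K[of r r] by simp
        then show "a r \<le> b r" unfolding a_def b_def using r by (intro divide_right_mono_neg) auto
      qed
      show "eventually (\<lambda>r. 0 \<le> a r) ?F" using ev01 apos by (auto elim: eventually_mono)
      fix \<epsilon> :: real assume e: "\<epsilon> > 0"
      show "eventually (\<lambda>r. b r \<le> (1+\<epsilon>) * a (r/2)) ?F"
      proof (rule eventually_mono[OF log_ratio_bound[OF e]])
        fix r :: real assume r: "0 < r \<and> r < 1 \<and> ln (r/2) / ln r \<le> 1 + \<epsilon>"
        have c2: "c (r/2) > 0" using cpos r by simp
        then have "ln (c (r/2)) \<le> ln (p r)" using K[of r r] by simp
        then have "b r \<le> ln (c (r/2)) / ln r" unfolding b_def using r by (intro divide_right_mono_neg) auto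
        also have "\<dots> = a (r/2) * (ln (r/2) / ln r)"
        proof -
          have "ln (r/2) < 0" using r by simp
          then show ?thesis unfolding a_def by (simp add: field_simps)
        qed
        also have "\<dots> \<le> a (r/2) * (1 + \<epsilon>)"
          using r apos[of "r/2"] by (intro mult_left_mono) auto
        finally show "b r \<le> (1+\<epsilon>) * a (r/2)" by (simp add: mult.commute)
      qed
    qed
  qed
  show ?thesis using low up main unfolding b_def p_def by simp
qed

end
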